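(* Let $D$ be a $3$-dicritical digraph and $uv$ an arc of $D$. Then $D$ admits a $uv$-colouring.
   Context: A $2$-dicolouring of a digraph is a map to $\{1,2\}$ such that each colour class induces an acyclic subdigraph (digons count as directed cycles). $D$ is $3$-dicritical if $D$ has no $2$-dicolouring but every proper subdigraph has one. For an arc $uv$ of $D$, a $uv$-colouring of $D$ is a map $\phi:V(D)\to\{1,2\}$ such that: $\phi$ is a $2$-dicolouring of $D\setminus uv$ (the digraph $D$ with the arc $uv$ deleted); $\phi(u)=\phi(v)=1$; and $D\setminus uv$ contains no directed path from $u$ to $v$ all of whose vertices have the same colour under $\phi$. *)

theory Defs
  imports Main
begin

text \<open>A (finite, loopless) digraph is given by a vertex set V and an arc set
A of ordered pairs; digons (both (x,y) and (y,x)) are allowed, parallel arcs are not.\<close>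

definition digraph :: "'a set \<Rightarrow> ('a \<times> 'a) set \<Rightarrow> bool" where
  "digraph V A \<longleftrightarrow> finite V \<and> A \<subseteq> V \<times> V \<and> (\<forall>x. (x, x) \<notin> A)"

definition induced_arcs :: "('a \<times> 'a) set \<Rightarrow> 'a set \<Rightarrow> ('a \<times> 'a) set" where
  "induced_arcs A S = A \<inter> (S \<times> S)"

definition colour_class :: "'a set \<Rightarrow> ('a \<Rightarrow> nat) \<Rightarrow> nat \<Rightarrow> 'a set" where
  "colour_class V \<phi> c = {x \<in> V. \<phi> x = c}"

text \<open>A 2-dicolouring: a map V to {1,2} such that each colour class induces an
acyclic subdigraph (a digon is a directed cycle, since acyclic means no x with (x,x) in the transitive closure).\<close>
definition two_dicolouring :: "'a set \<Rightarrow> ('a \<times> 'a) set \<Rightarrow> ('a \<Rightarrow> nat) \<Rightarrow> bool" where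
  "two_dicolouring V A \<phi> \<longleftrightarrow>
     (\<forall>x\<in>V. \<phi> x \<in> {1, 2}) \<and>
     (\<forall>c\<in>{1::nat, 2}. acyclic (induced_arcs A (colour_class V \<phi> c)))"

definition two_dicolourable :: "'a set \<Rightarrow> ('a \<times> 'a) set \<Rightarrow> bool" where
  "two_dicolourable V A \<longleftrightarrow> (\<exists>\<phi>. two_dicolouring V A \<phi>)"

definition subdigraph :: "'a set \<Rightarrow> ('a \<times> 'a) set \<Rightarrow> 'a set \<Rightarrow> ('a \<times> 'a) set \<Rightarrow> bool" where
  "subdigraph V' A' V A \<longleftrightarrow> V' \<subseteq> V \<and> A' \<subseteq> A \<and> A' \<subseteq> V' \<times> V'"

definition proper_subdigraph :: "'a set \<Rightarrow> ('a \<times> 'a) set \<Rightarrow> 'a set \<Rightarrow> ('a \<times> 'a) set \<Rightarrow> bool" where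
  "proper_subdigraph V' A' V A \<longleftrightarrow> subdigraph V' A' V A \<and> (V', A') \<noteq> (V, A)"

definition dicritical3 :: "'a set \<Rightarrow> ('a \<times> 'a) set \<Rightarrow> bool" where
  "dicritical3 V A \<longleftrightarrow> digraph V A \<and> \<not> two_dicolourable V A \<and>
     (\<forall>V' A'. proper_subdigraph V' A' V A \<longrightarrow> two_dicolourable V' A')"

text \<open>Since u has colour 1,
such a path would lie in colour class 1; as u \<noteq> v (no loops), such a path has at least one arc.\<close>
definition uv_colouring :: "'a set \<Rightarrow> ('a \<times> 'a) set \<Rightarrow> 'a \<Rightarrow> 'a \<Rightarrow> ('a \<Rightarrow> nat) \<Rightarrow> bool" where
  "uv_colouring V A u v \<phi> \<longleftrightarrow>
     two_dicolouring V (A - {(u, v)}) \<phi> \<and> \<phi> u = 1 \<and> \<phi> v = 1 \<and>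
     (u, v) \<notin> (induced_arcs (A - {(u, v)}) (colour_class V \<phi> 1))\<^sup>+"

end

theory Submission
  imports Defs
begin

lemma trancl_add_edge:
  assumes "(x, y) \<in> (R \<union> {(u, v)})\<^sup>+"
  shows "(x, y) \<in> R\<^sup>+ \<or> ((x, u) \<in> R\<^sup>* \<and> (v, y) \<in> R\<^sup>*)"
  using assms
proof (induction rule: trancl_induct)
  case (base y)
  then show ?case by auto
next
  case (step y z)
  from step.hyps(2) have "(y, z) \<in> R \<or> (y, z) = (u, v)" by auto
  then show ?case
  proof
    assume "(y, z) \<in> R"
    with step.IH show ?thesis
      by (meson rtrancl.rtrancl_into_rtrancl trancl.trancl_into_trancl)
  next
    assume e: "(y, z) = (u, v)"
    from step.IH e have "(x, u) \<in> R\<^sup>*"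
      by (auto dest: trancl_into_rtrancl)
    with e show ?thesis by auto
  qed
qed

lemma swap_col:
  assumes "two_dicolouring V B \<phi>" "c \<in> {1,2::nat}"
  shows "\<exists>\<psi>. two_dicolouring V B \<psi> \<and> colour_class V \<psi> 1 = colour_class V \<phi> c"
proof (cases "c = 1")
  case True then show ?thesis using assms by blast
next
  case False
  hence c2: "c = 2" using assms by auto
  define \<psi> where "\<psi> x = (if \<phi> x = 1 then (2::nat) else 1)" for x
  have v: "\<forall>x\<in>V. \<phi> x \<in> {1,2}" using assms unfolding two_dicolouring_def by auto
  have e1: "colour_class V \<psi> 1 = colour_class V \<phi> 2"
    using v unfolding colour_class_def \<psi>_def by auto
  have e2: "colour_class V \<psi> 2 = colour_class V \<phi> 1"
    using v unfolding colour_class_def \<psi>_def by auto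
  have "two_dicolouring V B \<psi>"
    using assms(1) e1 e2 unfolding two_dicolouring_def by (auto simp: \<psi>_def)
  then show ?thesis using e1 c2 by blast
qed

theorem lemma13:
  assumes "dicritical3 V A" and "(u, v) \<in> A"
  shows "\<exists>\<phi>. uv_colouring V A u v \<phi>"
proof -
  let ?B = "A - {(u, v)}"
  have dg: "digraph V A" and nc: "\<not> two_dicolourable V A"
    and cr: "\<And>V' A'. proper_subdigraph V' A' V A \<Longrightarrow> two_dicolourable V' A'"
    using assms(1) unfolding dicritical3_def by auto
  have "proper_subdigraph V ?B V A"
    using dg assms(2) unfolding proper_subdigraph_def subdigraph_def digraph_def by auto
  then obtain \<phi> where phi: "two_dicolouring V ?B \<phi>"
    using cr unfolding two_dicolourable_def by blast
  have range: "\<forall>x\<in>V. \<phi> x \<in> {1,2}" using phi unfolding two_dicolouring_def by auto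
  from nc have "\<not> two_dicolouring V A \<phi>" unfolding two_dicolourable_def by blast
  then obtain c where c: "c \<in> {1,2::nat}"
    and cyc: "\<not> acyclic (induced_arcs A (colour_class V \<phi> c))"
    using range unfolding two_dicolouring_def by auto
  define R where "R = induced_arcs ?B (colour_class V \<phi> c)"
  have acR: "acyclic R" using phi c unfolding R_def two_dicolouring_def by auto
  have uvc: "u \<in> colour_class V \<phi> c \<and> v \<in> colour_class V \<phi> c"
  proof (rule ccontr)
    assume "\<not> ?thesis"
    hence "induced_arcs A (colour_class V \<phi> c) = R"
      unfolding R_def induced_arcs_def by auto
    with cyc acR show False by simp
  qed
  hence "induced_arcs A (colour_class V \<phi> c) = R \<union> {(u, v)}"
    using assms(2) unfolding R_def induced_arcs_def by auto
  with cyc obtain x where "(x, x) \<in> (R \<union> {(u, v)})\<^sup>+"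
    unfolding acyclic_def by auto
  from trancl_add_edge[OF this] acR have "(x, u) \<in> R\<^sup>* \<and> (v, x) \<in> R\<^sup>*"
    unfolding acyclic_def by auto
  hence vu: "(v, u) \<in> R\<^sup>*" by auto
  have nouv: "(u, v) \<notin> R\<^sup>+"
  proof
    assume "(u, v) \<in> R\<^sup>+"
    with vu have "(u, u) \<in> R\<^sup>+" by auto
    with acR show False unfolding acyclic_def by auto
  qed
  obtain \<psi> where psi: "two_dicolouring V ?B \<psi>"
    and cc: "colour_class V \<psi> 1 = colour_class V \<phi> c"
    using swap_col[OF phi c] by blast
  have "\<psi> u = 1" "\<psi> v = 1" using uvc cc unfolding colour_class_def by auto
  moreover have "(u, v) \<notin> (induced_arcs ?B (colour_class V \<psi> 1))\<^sup>+"
    using nouv cc R_def by simp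
  ultimately have "uv_colouring V A u v \<psi>"
    using psi unfolding uv_colouring_def by auto
  then show ?thesis by blast
qed

end
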